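(* Let $d \geq 2$. For all $n \geq 0$ and all $i,j \in [0,d-1]$, $$a_{j,d}(a_{i,d}(n)) = d\,a_{i,d}(n) + \overline{(j-i)}_d = \begin{cases} d\,a_{i,d}(n) + j - i & \text{if } j \geq i,\\ d\,a_{i,d}(n) + d + j - i & \text{if } j < i.\end{cases}$$
   Context: Let $d \geq 2$ be an integer. For an integer $x$, $\overline{(x)}_d$ denotes the unique integer in $[0,d-1]$ congruent to $x$ modulo $d$. For $n \geq 0$, $s_d(n)$ denotes the sum of the base-$d$ digits of $n$. For $j \in [0,d-1]$, $(a_{j,d}(n))_{n\geq 0}$ is the strictly increasing enumeration (indexed from $n=0$) of all nonnegative integers $k$ with $s_d(k) \equiv j \pmod d$. *)

theory Defs
  imports Main "HOL-Library.Infinite_Set"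
begin

fun digit_sum :: "nat \<Rightarrow> nat \<Rightarrow> nat" where
  "digit_sum d n = (if d < 2 \<or> n = 0 then 0 else n mod d + digit_sum d (n div d))"

text \<open>a_{j,d}(n): the n-th (from 0) element, in increasing order, of the set of
  nonnegative integers k with s_d(k) congruent to j mod d.\<close>
definition a_seq :: "nat \<Rightarrow> nat \<Rightarrow> nat \<Rightarrow> nat" where
  "a_seq j d n = enumerate {k. digit_sum d k mod d = j mod d} n"

end

theory Submission
  imports Defs
begin

lemma enum_eq_strict_mono:
  fixes f :: "nat \<Rightarrow> nat"
  assumes sm: "strict_mono f"
  shows "enumerate (range f) n = f n"
proof -
  have inf: "infinite (range f)"
    by (rule range_inj_infinite[OF strict_mono_imp_inj_on[OF sm]])
  show ?thesis
  proof (induction n)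
    case 0
    show ?case unfolding enumerate_0
    proof (rule Least_equality)
      show "f 0 \<in> range f" by simp
    next
      fix y assume "y \<in> range f"
      then obtain m where "y = f m" by blast
      moreover have "f 0 \<le> f m" using strict_mono_less_eq[OF sm, of 0 m] by simp
      ultimately show "f 0 \<le> y" by simp
    qed
  next
    case (Suc n)
    show ?case unfolding enumerate_Suc''[OF inf] Suc
    proof (rule Least_equality)
      show "f (Suc n) \<in> range f \<and> f n < f (Suc n)"
        using strict_mono_less[OF sm, of n "Suc n"] by simp
    next
      fix y assume "y \<in> range f \<and> f n < y"
      then obtain m where y: "y = f m" and lt: "f n < f m" by blast
      then have "n < m" using strict_mono_less[OF sm] by blast
      then have "Suc n \<le> m" by simp
      then have "f (Suc n) \<le> f m" using strict_mono_less_eq[OF sm] by blast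
      then show "f (Suc n) \<le> y" using y by simp
    qed
  qed
qed

declare digit_sum.simps[simp del]

lemma digit_sum_0[simp]: "digit_sum d 0 = 0"
  by (subst digit_sum.simps) simp

lemma digit_sum_step:
  assumes "d \<ge> 2" "r < d"
  shows "digit_sum d (d*m + r) = r + digit_sum d m"
proof (cases "d*m + r = 0")
  case True
  then have "m = 0" "r = 0" using assms by auto
  then show ?thesis by simp
next
  case False
  have "(d*m + r) mod d = r" "(d*m+r) div d = m" using assms by auto
  moreover have "digit_sum d (d*m+r) = (if d<2 \<or> d*m+r=0 then 0 else (d*m+r) mod d + digit_sum d ((d*m+r) div d))"
    by (rule digit_sum.simps)
  ultimately show ?thesis using False assms by simp
qed

lemma a_seq_formula:
  assumes d: "d \<ge> 2" and j: "j < d"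
  shows "a_seq j d m = d*m + (j + d - digit_sum d m mod d) mod d"
    and "digit_sum d (a_seq j d m) mod d = j"
proof -
  define f where "f m = d*m + (j + d - digit_sum d m mod d) mod d" for m
  have lt: "f m < d * Suc m" for m
  proof -
    have "(j + d - digit_sum d m mod d) mod d < d" using d by simp
    then show ?thesis unfolding f_def by simp
  qed
  have sm: "strict_mono f"
  unfolding strict_mono_Suc_iff
  proof
    fix n
    have "f n < d * Suc n" by (rule lt)
    also have "\<dots> \<le> f (Suc n)" unfolding f_def by simp
    finally show "f n < f (Suc n)" .
  qed
  have S: "{k. digit_sum d k mod d = j mod d} = range f"
  proof (intro set_eqI iffI)
    fix k assume "k \<in> {k. digit_sum d k mod d = j mod d}"
    then have k: "digit_sum d k mod d = j" using j by simp
    define m r where "m = k div d" and "r = k mod d"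
    have r: "r < d" using d r_def by simp
    have kk: "k = d*m + r" unfolding m_def r_def by simp
    have "digit_sum d k = r + digit_sum d m" using digit_sum_step[OF d r] kk by simp
    with k have "(r + digit_sum d m) mod d = j" by simp
    then have "r = (j + d - digit_sum d m mod d) mod d"
    proof -
      assume h: "(r + digit_sum d m) mod d = j"
      let ?s = "digit_sum d m mod d"
      have s: "?s < d" using d by simp
      have "(r + ?s) mod d = j" using h by (simp add: mod_add_right_eq)
      moreover have "(j + d - ?s) mod d = ((r + ?s) mod d + d - ?s) mod d" using calculation by simp
      ultimately show ?thesis
      proof -
        have "((r + ?s) mod d + d - ?s) mod d = r"
        proof (cases "r + ?s < d")
          case True then show ?thesis using r s by simp
        next
          case False
          then have ge: "d \<le> r + ?s" by simp
          have "(r + ?s) mod d = (r + ?s - d) mod d" by (rule le_mod_geq[OF ge])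
          moreover have "r + ?s - d < d" using r s by linarith
          ultimately have "(r + ?s) mod d = r + ?s - d" by simp
          then show ?thesis using False r s by simp
        qed
        then show ?thesis using \<open>(j + d - ?s) mod d = _\<close> by simp
      qed
    qed
    then show "k \<in> range f" using kk unfolding f_def by auto
  next
    fix k assume "k \<in> range f"
    then obtain m where km: "k = f m" by auto
    let ?s = "digit_sum d m mod d"
    let ?r = "(j + d - ?s) mod d"
    have r: "?r < d" using d by simp
    have "digit_sum d k = ?r + digit_sum d m" using km digit_sum_step[OF d r] f_def by simp
    then have "digit_sum d k mod d = (?r + ?s) mod d" by (simp add: mod_add_right_eq)
    also have "\<dots> = j"
    proof -
      have s: "?s < d" using d by simp
      have "(?r + ?s) mod d = ((j + d - ?s) + ?s) mod d" by (simp add: mod_add_left_eq)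
      also have "\<dots> = (j + d) mod d" using s by simp
      also have "\<dots> = j" using j by simp
      finally show ?thesis .
    qed
    finally show "k \<in> {k. digit_sum d k mod d = j mod d}" using j by simp
  qed
  show "a_seq j d m = d*m + (j + d - digit_sum d m mod d) mod d" unfolding a_seq_def S enum_eq_strict_mono[OF sm] f_def ..
  have "a_seq j d m \<in> range f" unfolding a_seq_def S enum_eq_strict_mono[OF sm] by simp
  then show "digit_sum d (a_seq j d m) mod d = j" using S j by auto
qed

theorem theorem1:
  fixes d n i j :: nat
  assumes "d \<ge> 2" and "i < d" and "j < d"
  shows "int (a_seq j d (a_seq i d n)) = int d * int (a_seq i d n) + (int j - int i) mod int d
       \<and> (int (a_seq j d (a_seq i d n)) =
            (if j \<ge> i then int d * int (a_seq i d n) + int j - int i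
             else int d * int (a_seq i d n) + int d + int j - int i))"
proof -
  let ?m = "a_seq i d n"
  have si: "digit_sum d ?m mod d = i"
    using a_seq_formula(2)[OF assms(1,2)] .
  have e: "a_seq j d ?m = d * ?m + (j + d - i) mod d"
    using a_seq_formula(1)[OF assms(1,3), of ?m] si by simp
  have m1: "(int j - int i) mod int d = int ((j + d - i) mod d)"
  proof -
    have "int ((j + d - i) mod d) = (int j + int d - int i) mod int d"
      using assms by (simp add: zmod_int of_nat_diff)
    also have "\<dots> = ((int j - int i) + int d) mod int d" by (simp add: algebra_simps)
    also have "\<dots> = (int j - int i) mod int d" by (rule mod_add_self2)
    finally show ?thesis by simp
  qed
  have m2: "(j + d - i) mod d = (if i \<le> j then j - i else d + j - i)"
  proof (cases "i \<le> j")
    case True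
    have "(j + d - i) mod d = (j + d - i - d) mod d" by (rule le_mod_geq) (use True in simp)
    moreover have "j + d - i - d = j - i" using True by simp
    moreover have "j - i < d" using assms by simp
    ultimately show ?thesis using True by simp
  next
    case False
    then show ?thesis using assms by simp
  qed
  have ee: "int (a_seq j d ?m) = int d * int ?m + int ((j + d - i) mod d)"
    using e by simp
  then have A: "int (a_seq j d ?m) = int d * int ?m + (int j - int i) mod int d"
    using m1 by simp
  have B: "int (a_seq j d ?m) = (if j \<ge> i then int d * int ?m + int j - int i
             else int d * int ?m + int d + int j - int i)"
  proof (cases "i \<le> j")
    case True
    then have "(j + d - i) mod d = j - i" using m2 by simp
    then show ?thesis using True ee by (simp add: of_nat_diff)
  next
    case False
    then have "(j + d - i) mod d = d + j - i" using m2 by simp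
    moreover have "int (d + j - i) = int d + int j - int i" using assms by (simp add: of_nat_diff)
    ultimately show ?thesis using False ee by simp
  qed
  show ?thesis using A B by blast
qed

end
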